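(* Let $0<\gamma<1$, integers $n\ge p\ge2$, and $\beta_{\gamma,p}:=\min\left\{\frac{1-\gamma}{2p}\log\bigl(\frac{2p}{p+1}\bigr),\ \frac{1-\gamma}{8p^\gamma(p-1)^{1-\gamma}}\right\}$. Then $$\|C_\gamma^{(p)}\|_{1\to2}^2\le1+\frac{1}{\Gamma(\gamma)^2}H_{p-1}^{(2-2\gamma)}+\frac{1}{\Gamma(\gamma)^2p^{2-2\gamma}}\cdot\frac{1}{\beta_{\gamma,p}(2-\beta_{\gamma,p})},$$ where $H_m^{(s)}:=\sum_{j=1}^m j^{-s}$. Moreover there is an absolute constant $K$ (independent of $n,p,\gamma$) such that $$\|C_\gamma^{(p)}\|_{1\to2}\le\begin{cases}K/\sqrt{1/2-\gamma}, & 0<\gamma<\tfrac12,\\ K\sqrt{\log p}, & \gamma=\tfrac12,\\ K\,p^{\gamma-1/2}\big/\sqrt{(1-\gamma)(\gamma-1/2)}, & \tfrac12<\gamma<1.\end{cases}$$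
   Context: $\log$ is the natural logarithm and $\Gamma$ the Gamma function. $(\tilde c_\gamma)_i:=(-1)^i\binom{\gamma}{i}$ with $\binom{\gamma}{i}=\prod_{j=1}^{i}\frac{\gamma+1-j}{j}$. $C_\gamma^{(p)}$ is the inverse of the $n\times n$ lower-triangular Toeplitz matrix whose $r$-th subdiagonal ($r=0$ the main diagonal) equals $(\tilde c_\gamma)_r$ for $r\le p-1$ and $0$ for $r\ge p$. For a matrix $M$, $\|M\|_{1\to2}$ is the maximum $\ell_2$ norm of a column of $M$. *)

theory Defs
  imports "HOL-Analysis.Analysis" "Jordan_Normal_Form.Matrix"
begin

definition ctilde :: "real \<Rightarrow> nat \<Rightarrow> real" where
  "ctilde \<gamma> i = (-1) ^ i * (\<gamma> gchoose i)"

definition toepT :: "real \<Rightarrow> nat \<Rightarrow> nat \<Rightarrow> real mat" where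
  "toepT \<gamma> p n = mat n n (\<lambda>(i, j). if j \<le> i \<and> i - j \<le> p - 1 then ctilde \<gamma> (i - j) else 0)"

definition Cmat :: "real \<Rightarrow> nat \<Rightarrow> nat \<Rightarrow> real mat" where
  "Cmat \<gamma> p n = (THE M. M \<in> carrier_mat n n \<and> toepT \<gamma> p n * M = 1\<^sub>m n \<and> M * toepT \<gamma> p n = 1\<^sub>m n)"

definition norm12 :: "real mat \<Rightarrow> real" where
  "norm12 M = Max ((\<lambda>j. sqrt (\<Sum>i<dim_row M. (M $$ (i, j))\<^sup>2)) ` {..<dim_col M})"

definition genHarm :: "nat \<Rightarrow> real \<Rightarrow> real" where
  "genHarm m s = (\<Sum>j=1..m. 1 / (real j) powr s)"

definition betaC :: "real \<Rightarrow> nat \<Rightarrow> real" where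
  "betaC \<gamma> p = min ((1 - \<gamma>) / (2 * real p) * ln (2 * real p / (real p + 1)))
                     ((1 - \<gamma>) / (8 * real p powr \<gamma> * (real p - 1) powr (1 - \<gamma>)))"

end

theory Submission
  imports Defs "HOL-Computational_Algebra.Formal_Power_Series" "Jordan_Normal_Form.Determinant"
begin
definition qc :: "real \<Rightarrow> nat \<Rightarrow> nat \<Rightarrow> real" where
  "qc g p r = (if r < p then ctilde g r else 0)"

function cseq :: "real \<Rightarrow> nat \<Rightarrow> nat \<Rightarrow> real" where
  "cseq g p k = (if k = 0 then 1 else - (\<Sum>r\<in>{1..k}. qc g p r * cseq g p (k - r)))"
  by pat_completeness auto
termination by (relation "Wellfounded.measure (\<lambda>(g,p,k). k)") auto

declare cseq.simps[simp del]

definition bseq :: "real \<Rightarrow> nat \<Rightarrow> real" where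
  "bseq g k = pochhammer g k / fact k"

definition tp :: "real \<Rightarrow> nat \<Rightarrow> real" where
  "tp g m = (\<Prod>j\<in>{1..m}. 1 - g / real j)"

lemma ctilde_0[simp]: "ctilde g 0 = 1" by (simp add: ctilde_def)

lemma ctilde_Suc: "ctilde g (Suc r) = ctilde g r * (real r - g) / (real r + 1)"
proof -
  have "g gchoose (Suc r) = (g gchoose r) * (g - real r) / (real r + 1)"
    by (simp add: gbinomial_prod_rev prod.atLeast0_lessThan_Suc field_simps)
  then show ?thesis by (simp only: ctilde_def) (simp add: field_simps)
qed

lemma tp_Suc: "tp g (Suc m) = tp g m * (1 - g / (real m + 1))"
  by (simp add: tp_def prod.nat_ivl_Suc' add.commute)

lemma ctilde_Suc_tp': "- ctilde g (Suc r) = g * tp g r / (real r + 1)"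
proof (induction r)
  case 0 then show ?case by (simp add: ctilde_def tp_def)
next
  case (Suc r)
  have "- ctilde g (Suc (Suc r)) = (- ctilde g (Suc r)) * (real (Suc r) - g) / (real (Suc r) + 1)"
    using ctilde_Suc[of g "Suc r"] by simp
  also have "\<dots> = g * tp g r / (real r + 1) * (real r + 1 - g) / (real r + 2)"
    using Suc by (simp add: algebra_simps)
  also have "\<dots> = g * tp g (Suc r) / (real (Suc r) + 1)"
    by (simp add: tp_Suc field_simps)
  finally show ?case .
qed

lemma ctilde_Suc_tp: "ctilde g (Suc r) = - g * tp g r / (real r + 1)"
  using ctilde_Suc_tp'[of g r] by simp

lemma tp_pos: "g < 1 \<Longrightarrow> tp g m > 0"
  unfolding tp_def by (intro prod_pos) (auto simp: field_simps)

lemma a_tele: "- ctilde g (Suc r) = tp g r - tp g (Suc r)"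
  by (simp add: ctilde_Suc_tp tp_Suc field_simps)

lemma sum_a: "(\<Sum>r\<in>{1..N}. - ctilde g r) = 1 - tp g N"
proof (induction N)
  case 0 then show ?case by (simp add: tp_def)
next
  case (Suc N) then show ?case using a_tele[of g N] by (simp add: sum.atLeast_Suc_atMost_Suc_shift)
qed

lemma sum_tp: "g < 1 \<Longrightarrow> (\<Sum>m<N. tp g m) = real N * tp g N / (1 - g)"
proof (induction N)
  case 0 then show ?case by simp
next
  case (Suc N)
  have "(\<Sum>m<Suc N. tp g m) = real N * tp g N / (1 - g) + tp g N" using Suc by simp
  also have "\<dots> = real (Suc N) * tp g (Suc N) / (1 - g)"
    using Suc.prems by (simp add: tp_Suc divide_simps, simp add: algebra_simps)
  finally show ?case .
qed

lemma sum_ra: "g < 1 \<Longrightarrow> (\<Sum>r\<in>{1..N}. real r * (- ctilde g r)) = g * real N * tp g N / (1 - g)"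
proof -
  assume g: "g < 1"
  have "(\<Sum>r\<in>{1..N}. real r * (- ctilde g r)) = (\<Sum>m<N. real (Suc m) * (- ctilde g (Suc m)))"
    by (rule sum.reindex_bij_witness[of _ Suc "\<lambda>r. r - 1"]) auto
  also have "\<dots> = (\<Sum>m<N. g * tp g m)"
    by (intro sum.cong refl) (simp add: ctilde_Suc_tp field_simps)
  also have "\<dots> = g * real N * tp g N / (1 - g)"
    using sum_tp[OF g, of N] by (simp add: sum_distrib_left[symmetric])
  finally show ?thesis .
qed

lemma a_nonneg: "0 < g \<Longrightarrow> g < 1 \<Longrightarrow> r \<ge> 1 \<Longrightarrow> - ctilde g r \<ge> 0"
proof (cases r)
  case (Suc m)
  assume "0 < g" "g < 1"
  then have "g * tp g m / (real m + 1) \<ge> 0" using tp_pos[of g m] by simp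
  then show ?thesis using Suc by (simp add: ctilde_Suc_tp)
qed simp

lemma bseq_conv: 
  assumes "k \<ge> 1"
  shows "(\<Sum>r\<in>{0..k}. ctilde g r * bseq g (k - r)) = 0"
proof -
  have nb: "((-g) gchoose m) = (-1)^m * bseq g m" for m
    by (simp add: gbinomial_pochhammer bseq_def)
  have "(\<Sum>r\<in>{0..k}. ctilde g r * bseq g (k - r)) = (\<Sum>r\<in>{0..k}. (-1)^k * ((g gchoose r) * ((-g) gchoose (k - r))))"
  proof (intro sum.cong refl)
    fix r assume r: "r \<in> {0..k}"
    have "(-1::real)^k = (-1)^r * (-1)^(k-r)" using r by (simp add: power_add[symmetric])
    then show "ctilde g r * bseq g (k - r) = (-1)^k * ((g gchoose r) * ((-g) gchoose (k - r)))"
      by (simp add: ctilde_def nb)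
  qed
  also have "\<dots> = (-1)^k * ((g + (-g)) gchoose k)"
    by (simp add: sum_distrib_left[symmetric] gbinomial_Vandermonde)
  also have "\<dots> = 0" using assms by (simp add: gbinomial_0_left)
  finally show ?thesis .
qed

lemma bseq_rec: "k \<ge> 1 \<Longrightarrow> bseq g k = (\<Sum>r\<in>{1..k}. (- ctilde g r) * bseq g (k - r))"
  using bseq_conv[of k g] by (simp add: sum.atLeast_Suc_atMost sum_negf bseq_def)

lemma bseq_Suc: "bseq g (Suc k) = bseq g k * (g + real k) / (real k + 1)"
  by (simp add: bseq_def pochhammer_Suc field_simps)

lemma bseq_nonneg: "0 < g \<Longrightarrow> bseq g k \<ge> 0"
  by (simp add: bseq_def pochhammer_nonneg)

lemma cseq_conv: "(\<Sum>r\<in>{0..k}. qc g p r * cseq g p (k - r)) = (if k = 0 then 1 else 0)" if "p \<ge> 1"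
proof (cases "k = 0")
  case True then show ?thesis using that by (simp add: qc_def cseq.simps)
next
  case False
  then show ?thesis using that
    by (simp add: sum.atLeast_Suc_atMost qc_def cseq.simps[of g p k])
qed

definition Mc :: "real \<Rightarrow> nat \<Rightarrow> nat \<Rightarrow> real mat" where
  "Mc g p n = mat n n (\<lambda>(i, j). if j \<le> i then cseq g p (i - j) else 0)"

lemma toepT_idx: "i < n \<Longrightarrow> j < n \<Longrightarrow> p \<ge> 1 \<Longrightarrow>
   toepT g p n $$ (i, j) = (if j \<le> i then qc g p (i - j) else 0)"
  by (auto simp: toepT_def qc_def)

lemma TM_one:
  assumes p: "p \<ge> 1"
  shows "toepT g p n * Mc g p n = 1\<^sub>m n"
proof (rule eq_matI)
  show "dim_row (toepT g p n * Mc g p n) = dim_row (1\<^sub>m n)" by (simp add: toepT_def)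
  show "dim_col (toepT g p n * Mc g p n) = dim_col (1\<^sub>m n)" by (simp add: Mc_def)
  fix i j assume i: "i < dim_row (1\<^sub>m n)" and j: "j < dim_col (1\<^sub>m n)"
  then have i: "i < n" and j: "j < n" by auto
  have "(toepT g p n * Mc g p n) $$ (i, j) = (\<Sum>l\<in>{0..<n}. toepT g p n $$ (i, l) * Mc g p n $$ (l, j))"
    using i j by (simp add: toepT_def Mc_def scalar_prod_def)
  also have "\<dots> = (\<Sum>l\<in>{0..<n}. if j \<le> l \<and> l \<le> i then qc g p (i - l) * cseq g p (l - j) else 0)"
    using i j p by (intro sum.cong refl) (simp add: toepT_idx Mc_def)
  also have "\<dots> = (\<Sum>l\<in>{l\<in>{0..<n}. j \<le> l \<and> l \<le> i}. qc g p (i - l) * cseq g p (l - j))"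
    by (rule sum.inter_filter[symmetric]) simp
  also have "\<dots> = 1\<^sub>m n $$ (i, j)"
  proof (cases "j \<le> i")
    case False
    then have "{l\<in>{0..<n}. j \<le> l \<and> l \<le> i} = {}" by auto
    then show ?thesis using False i j by simp
  next
    case True
    have "{l\<in>{0..<n}. j \<le> l \<and> l \<le> i} = {j..i}" using i by auto
    moreover have "(\<Sum>l\<in>{j..i}. qc g p (i - l) * cseq g p (l - j))
       = (\<Sum>r\<in>{0..i-j}. qc g p r * cseq g p (i - j - r))"
    proof (rule sum.reindex_bij_witness[of _ "\<lambda>r. i - r" "\<lambda>l. i - l"])
      fix l assume "l \<in> {j..i}"
      then show "i - (i - l) = l" "i - l \<in> {0..i-j}" "qc g p (i - l) * cseq g p (i - j - (i - l)) = qc g p (i - l) * cseq g p (l - j)"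
        by (auto simp: diff_diff_right)
    next
      fix r assume "r \<in> {0..i-j}"
      then show "i - (i - r) = r" "i - r \<in> {j..i}" using True by auto
    qed
    ultimately have "(\<Sum>l\<in>{l\<in>{0..<n}. j \<le> l \<and> l \<le> i}. qc g p (i - l) * cseq g p (l - j))
       = (\<Sum>r\<in>{0..i-j}. qc g p r * cseq g p (i - j - r))" by simp
    also have "\<dots> = (if i - j = 0 then 1 else 0)" by (rule cseq_conv[OF p])
    finally show ?thesis using True i j by auto
  qed
  finally show "(toepT g p n * Mc g p n) $$ (i, j) = 1\<^sub>m n $$ (i, j)" .
qed

lemma Cmat_eq:
  assumes p: "p \<ge> 1"
  shows "Cmat g p n = Mc g p n"
  unfolding Cmat_def
proof (rule the_equality)
  have T: "toepT g p n \<in> carrier_mat n n" by (simp add: toepT_def)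
  have M: "Mc g p n \<in> carrier_mat n n" by (simp add: Mc_def)
  have TM: "toepT g p n * Mc g p n = 1\<^sub>m n" by (rule TM_one[OF p])
  show "Mc g p n \<in> carrier_mat n n \<and> toepT g p n * Mc g p n = 1\<^sub>m n \<and> Mc g p n * toepT g p n = 1\<^sub>m n"
    using M TM mat_mult_left_right_inverse[OF T M TM] by simp
  fix M' assume H: "M' \<in> carrier_mat n n \<and> toepT g p n * M' = 1\<^sub>m n \<and> M' * toepT g p n = 1\<^sub>m n"
  then have M': "M' \<in> carrier_mat n n" and MT: "M' * toepT g p n = 1\<^sub>m n" by auto
  have "M' = M' * (toepT g p n * Mc g p n)" using M' TM by simp
  also have "\<dots> = (M' * toepT g p n) * Mc g p n" using M' T M by (simp add: assoc_mult_mat)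
  also have "\<dots> = Mc g p n" using MT M by simp
  finally show "M' = Mc g p n" .
qed

lemma col_bound:
  assumes j: "j < n"
  shows "(\<Sum>i<n. (Mc g p n $$ (i, j))\<^sup>2) \<le> (\<Sum>k<n. (cseq g p k)\<^sup>2)"
proof -
  have "(\<Sum>i<n. (Mc g p n $$ (i, j))\<^sup>2) = (\<Sum>i<n. if j \<le> i then (cseq g p (i - j))\<^sup>2 else 0)"
    using j by (intro sum.cong refl) (auto simp: Mc_def)
  also have "\<dots> = (\<Sum>i\<in>{i\<in>{..<n}. j \<le> i}. (cseq g p (i - j))\<^sup>2)"
    by (rule sum.inter_filter[symmetric]) simp
  also have "\<dots> = (\<Sum>k<n-j. (cseq g p k)\<^sup>2)"
    by (intro sum.reindex_bij_witness[of _ "\<lambda>k. k + j" "\<lambda>i. i - j"]) auto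
  also have "\<dots> \<le> (\<Sum>k<n. (cseq g p k)\<^sup>2)"
    by (intro sum_mono2) auto
  finally show ?thesis .
qed

lemma norm12_sq_le:
  assumes p: "p \<ge> 1" and n: "n \<ge> 1"
  shows "(norm12 (Cmat g p n))\<^sup>2 \<le> (\<Sum>k<n. (cseq g p k)\<^sup>2)"
proof -
  let ?S = "\<Sum>k<n. (cseq g p k)\<^sup>2"
  let ?F = "(\<lambda>j. sqrt (\<Sum>i<n. (Mc g p n $$ (i, j))\<^sup>2)) ` {..<n}"
  have eq: "norm12 (Cmat g p n) = Max ?F"
    by (simp add: norm12_def Cmat_eq[OF p] Mc_def)
  have fin: "finite ?F" by simp
  have ne: "?F \<noteq> {}" using n by (simp add: lessThan_empty_iff)
  have le: "Max ?F \<le> sqrt ?S"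
    using fin ne col_bound by (auto simp: Max_le_iff)
  have ge: "0 \<le> Max ?F"
  proof -
    have "sqrt (\<Sum>i<n. (Mc g p n $$ (i, 0))\<^sup>2) \<in> ?F" using n by auto
    then have "sqrt (\<Sum>i<n. (Mc g p n $$ (i, 0))\<^sup>2) \<le> Max ?F" using fin by simp
    moreover have "0 \<le> sqrt (\<Sum>i<n. (Mc g p n $$ (i, 0))\<^sup>2)" by (simp add: sum_nonneg)
    ultimately show ?thesis by linarith
  qed
  have "(Max ?F)\<^sup>2 \<le> (sqrt ?S)\<^sup>2" using le ge by (intro power_mono) auto
  also have "\<dots> = ?S" by (simp add: sum_nonneg)
  finally show ?thesis using eq by simp
qed

lemma cseq_alt: "k \<ge> 1 \<Longrightarrow> cseq g p k = (\<Sum>r\<in>{1..k}. (- qc g p r) * cseq g p (k - r))"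
  by (simp add: cseq.simps[of g p k] sum_negf)

lemma cseq_bounds:
  assumes g0: "0 < g" and g1: "g < 1"
  shows "0 \<le> cseq g p k \<and> cseq g p k \<le> bseq g k"
proof (induction k rule: less_induct)
  case (less k)
  show ?case
  proof (cases "k = 0")
    case True then show ?thesis by (simp add: cseq.simps bseq_def)
  next
    case False
    then have k: "k \<ge> 1" by simp
    have t: "0 \<le> (- qc g p r) * cseq g p (k - r) \<and> (- qc g p r) * cseq g p (k - r) \<le> (- ctilde g r) * bseq g (k - r)"
      if r: "r \<in> {1..k}" for r
    proof -
      have ih: "0 \<le> cseq g p (k - r)" "cseq g p (k - r) \<le> bseq g (k - r)" using less[of "k - r"] r by auto
      have a: "0 \<le> - ctilde g r" using a_nonneg[OF g0 g1] r by auto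
      have q: "0 \<le> - qc g p r" "- qc g p r \<le> - ctilde g r" using a by (auto simp: qc_def)
      have 1: "0 \<le> (- qc g p r) * cseq g p (k - r)" by (rule mult_nonneg_nonneg[OF q(1) ih(1)])
      have 2: "(- qc g p r) * cseq g p (k - r) \<le> (- ctilde g r) * bseq g (k - r)"
        by (rule mult_mono[OF q(2) ih(2) a ih(1)])
      show ?thesis using 1 2 by blast
    qed
    have "0 \<le> (\<Sum>r\<in>{1..k}. (- qc g p r) * cseq g p (k - r))" using t by (intro sum_nonneg) auto
    moreover have "(\<Sum>r\<in>{1..k}. (- qc g p r) * cseq g p (k - r)) \<le> (\<Sum>r\<in>{1..k}. (- ctilde g r) * bseq g (k - r))"
      using t by (intro sum_mono) auto
    ultimately show ?thesis using cseq_alt[OF k] bseq_rec[OF k] by simp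
  qed
qed

lemma Gamma_ge1:
  assumes g0: "0 < g" and g1: "g < (1::real)"
  shows "Gamma g \<ge> 1"
proof -
  define t where "t = (1 - g) / (2 - g)"
  have t0: "0 \<le> t" "t \<le> 1" using g0 g1 by (auto simp: t_def field_simps)
  have g2: "2 - g \<noteq> 0" using g1 by simp
  have pt: "(1 - t) * g + t * 2 = 1" unfolding t_def using g2 by (simp add: divide_simps)
  have "(ln \<circ> Gamma) ((1 - t) *\<^sub>R g + t *\<^sub>R 2) \<le> (1 - t) * (ln \<circ> Gamma) g + t * (ln \<circ> Gamma) 2"
    using convex_onD[OF log_convex_Gamma_real, of t g 2] t0 g0 by simp
  moreover have "Gamma (2::real) = 1" using Gamma_fact[of 1, where 'a=real] by simp
  ultimately have "0 \<le> (1 - t) * ln (Gamma g)" using pt by simp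
  moreover have "1 - t > 0" using g0 g1 by (simp add: t_def field_simps)
  ultimately have "0 \<le> ln (Gamma g)" by (simp add: zero_le_mult_iff)
  then show ?thesis using Gamma_real_pos[OF g0] by simp
qed

lemma bseq_Gamma:
  assumes g0: "0 < g" and g1: "g < 1" and k: "k \<ge> 1"
  shows "bseq g k \<le> real k powr (g - 1) / Gamma g"
proof -
  have nz: "g \<notin> \<int>\<^sub>\<le>\<^sub>0" using g0 by (auto elim!: nonpos_Ints_cases)
  have Gk1: "Gamma (real k + 1) = fact k" using Gamma_fact[of k, where 'a=real] by (simp add: add.commute)
  have Gk: "Gamma (real k) = fact k / real k"
  proof -
    have "Gamma (real k + 1) = real k * Gamma (real k)"
    proof -
      have "real k \<notin> \<int>\<^sub>\<le>\<^sub>0"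
      proof
        assume "real k \<in> \<int>\<^sub>\<le>\<^sub>0"
        then obtain m where "real k = of_int m" "m \<le> 0" by (rule nonpos_Ints_cases)
        then show False using k by simp
      qed
      then show ?thesis using Gamma_plus1[of "real k"] by simp
    qed
    then show ?thesis using Gk1 k by (simp add: field_simps)
  qed
  have kpos: "real k > 0" using k by simp
  have "(ln \<circ> Gamma) ((1 - g) *\<^sub>R real k + g *\<^sub>R (real k + 1)) \<le> (1 - g) * (ln \<circ> Gamma) (real k) + g * (ln \<circ> Gamma) (real k + 1)"
    using convex_onD[OF log_convex_Gamma_real, of g "real k" "real k + 1"] g0 g1 kpos by simp
  moreover have "(1 - g) *\<^sub>R real k + g *\<^sub>R (real k + 1) = g + real k" by (simp add: algebra_simps)
  ultimately have "ln (Gamma (g + real k)) \<le> (1 - g) * ln (fact k / real k) + g * ln (fact k)"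
    using Gk Gk1 by simp
  also have "\<dots> = ln (fact k) + (g - 1) * ln (real k)"
    using kpos by (simp add: ln_div algebra_simps)
  finally have L: "ln (Gamma (g + real k)) \<le> ln (fact k) + (g - 1) * ln (real k)" .
  have "Gamma (g + real k) = exp (ln (Gamma (g + real k)))"
    using Gamma_real_pos[of "g + real k"] g0 by simp
  also have "\<dots> \<le> exp (ln (fact k) + (g - 1) * ln (real k))" using L by simp
  also have "\<dots> = fact k * real k powr (g - 1)"
    using kpos by (simp add: exp_add powr_def)
  finally have G: "Gamma (g + real k) \<le> fact k * real k powr (g - 1)" .
  have "bseq g k = Gamma (g + real k) / Gamma g / fact k"
    by (simp add: bseq_def pochhammer_Gamma[OF nz])
  also have "\<dots> \<le> fact k * real k powr (g - 1) / Gamma g / fact k"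
    using G Gamma_real_pos[OF g0] by (intro divide_right_mono) auto
  also have "\<dots> = real k powr (g - 1) / Gamma g" by simp
  finally show ?thesis .
qed

context
  fixes g :: real and p :: nat
  assumes g0: "0 < g" and g1: "g < 1" and p2: "2 \<le> p"
begin

lemma beta_pos: "0 < betaC g p"
proof -
  have "2 * real p / (real p + 1) > 1" using p2 by (simp add: field_simps)
  then have "ln (2 * real p / (real p + 1)) > 0" by simp
  moreover have "real p powr g > 0" "(real p - 1) powr (1 - g) > 0" using p2 by auto
  ultimately show ?thesis using g1 p2 unfolding betaC_def by (auto intro!: mult_pos_pos divide_pos_pos)
qed

lemma beta_upper: "betaC g p \<le> (1 - g) / (8 * (real p - 1))"
proof -
  have pm: "real p - 1 > 0" using p2 by simp
  have "(real p - 1) = (real p - 1) powr g * (real p - 1) powr (1 - g)"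
    using pm by (simp add: powr_add[symmetric])
  also have "\<dots> \<le> real p powr g * (real p - 1) powr (1 - g)"
    using pm g0 by (intro mult_right_mono powr_mono2) auto
  finally have le: "real p - 1 \<le> real p powr g * (real p - 1) powr (1 - g)" .
  have "(1 - g) / (8 * real p powr g * (real p - 1) powr (1 - g)) \<le> (1 - g) / (8 * (real p - 1))"
    using le pm g1 by (intro divide_left_mono) (auto simp: mult.assoc)
  then show ?thesis unfolding betaC_def by linarith
qed

lemma beta_lower: "(1 - g) / (8 * real p) \<le> betaC g p"
proof -
  have pp: "real p > 1" using p2 by simp
  have x: "2 * real p / (real p + 1) > 0" using pp by simp
  have "ln ((real p + 1) / (2 * real p)) \<le> (real p + 1) / (2 * real p) - 1"
    using pp by (intro ln_le_minus_one) simp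
  moreover have "ln ((real p + 1) / (2 * real p)) = - ln (2 * real p / (real p + 1))"
    using pp by (simp add: ln_div)
  moreover have "(real p + 1) / (2 * real p) - 1 \<le> - 1/4"
    using p2 by (simp add: field_simps)
  ultimately have L: "ln (2 * real p / (real p + 1)) \<ge> 1/4" by linarith
  have A1: "(1 - g) / (8 * real p) \<le> (1 - g) / (2 * real p) * ln (2 * real p / (real p + 1))"
  proof -
    have "(1 - g) / (8 * real p) = (1 - g) / (2 * real p) * (1/4)" by simp
    also have "\<dots> \<le> (1 - g) / (2 * real p) * ln (2 * real p / (real p + 1))"
      using L g1 pp by (intro mult_left_mono) auto
    finally show ?thesis .
  qed
  have "real p powr g * (real p - 1) powr (1 - g) \<le> real p powr g * real p powr (1 - g)"
    using pp g1 by (intro mult_left_mono powr_mono2) auto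
  also have "\<dots> = real p" using pp by (simp add: powr_add[symmetric])
  finally have le: "real p powr g * (real p - 1) powr (1 - g) \<le> real p" .
  have pos: "real p powr g * (real p - 1) powr (1 - g) > 0" using pp by simp
  have A2: "(1 - g) / (8 * real p) \<le> (1 - g) / (8 * real p powr g * (real p - 1) powr (1 - g))"
    using le pos g1 by (intro divide_left_mono) (auto simp: mult.assoc)
  show ?thesis using A1 A2 unfolding betaC_def by simp
qed

lemma beta_2p: "betaC g p \<le> (1 - g) / (2 * real p)"
proof -
  have "(1 - g) / (8 * (real p - 1)) \<le> (1 - g) / (2 * real p)"
    using p2 g1 by (intro divide_left_mono) auto
  then show ?thesis using beta_upper by linarith
qed

lemma beta_lt1: "betaC g p < 1"
proof -
  have "(1 - g) / (2 * real p) < 1" using p2 g0 g1 by (simp add: field_simps)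
  then show ?thesis using beta_2p by linarith
qed

lemma geo_sum: "(\<Sum>r\<in>{1..p-1}. (- ctilde g r) / (1 - betaC g p) ^ r) \<le> 1"
proof -
  define \<beta> where "\<beta> = betaC g p"
  define N where "N = p - 1"
  have b0: "0 < \<beta>" and b1: "\<beta> < 1" using beta_pos beta_lt1 by (auto simp: \<beta>_def)
  have bN: "\<beta> * real N \<le> (1 - g) / 8"
  proof -
    have "real N = real p - 1" using p2 by (simp add: N_def)
    moreover have "\<beta> * (8 * (real p - 1)) \<le> 1 - g"
      using beta_upper p2 by (simp add: \<beta>_def field_simps)
    ultimately have "\<beta> * real N * 8 \<le> 1 - g" by (simp add: mult_ac)
    then show ?thesis by simp
  qed
  have each: "(- ctilde g r) / (1 - \<beta>) ^ r \<le> (- ctilde g r) * (1 + 2 * real r * \<beta>)" if r: "r \<in> {1..N}" for r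
  proof -
    have rb: "real r * \<beta> \<le> 1/8"
    proof -
      have "real r * \<beta> \<le> real N * \<beta>" using r b0 by (intro mult_right_mono) auto
      then show ?thesis using bN g0 by (simp add: mult.commute)
    qed
    have bern: "1 - real r * \<beta> \<le> (1 - \<beta>) ^ r"
      using Bernoulli_inequality[of "- \<beta>" r] b1 by simp
    have pos: "0 < 1 - real r * \<beta>" using rb by simp
    have "1 / (1 - \<beta>) ^ r \<le> 1 / (1 - real r * \<beta>)"
      using bern pos by (intro divide_left_mono) auto
    also have "\<dots> \<le> 1 + 2 * real r * \<beta>"
    proof -
      define x where "x = real r * \<beta>"
      have x0: "0 \<le> x" "x \<le> 1/8" using rb b0 by (auto simp: x_def)
      have "0 \<le> x * (1 - 2 * x)" using x0 by (intro mult_nonneg_nonneg) auto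
      then have "1 \<le> (1 + 2 * x) * (1 - x)" by (simp add: algebra_simps)
      then have "1 / (1 - x) \<le> 1 + 2 * x" using x0 by (subst pos_divide_le_eq) auto
      then show ?thesis by (simp add: x_def mult.assoc)
    qed
    finally have "1 / (1 - \<beta>) ^ r \<le> 1 + 2 * real r * \<beta>" .
    moreover have "0 \<le> - ctilde g r" using a_nonneg[OF g0 g1] r by auto
    ultimately have "(- ctilde g r) * (1 / (1 - \<beta>) ^ r) \<le> (- ctilde g r) * (1 + 2 * real r * \<beta>)"
      by (intro mult_left_mono) auto
    then show ?thesis by simp
  qed
  have "(\<Sum>r\<in>{1..N}. (- ctilde g r) / (1 - \<beta>) ^ r) \<le> (\<Sum>r\<in>{1..N}. (- ctilde g r) * (1 + 2 * real r * \<beta>))"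
    using each by (intro sum_mono) auto
  also have "\<dots> = (\<Sum>r\<in>{1..N}. - ctilde g r) + 2 * \<beta> * (\<Sum>r\<in>{1..N}. real r * (- ctilde g r))"
  proof -
    have gen: "(\<Sum>r\<in>{1..N}. f r * (1 + 2 * real r * \<beta>)) = (\<Sum>r\<in>{1..N}. f r) + 2 * \<beta> * (\<Sum>r\<in>{1..N}. real r * f r)"
      for f :: "nat \<Rightarrow> real"
      by (simp add: distrib_left sum.distrib sum_distrib_left mult_ac)
    show ?thesis by (rule gen)
  qed
  also have "\<dots> = 1 - tp g N + 2 * \<beta> * (g * real N * tp g N / (1 - g))"
    using sum_a[of g N] sum_ra[OF g1, of N] by simp
  also have "\<dots> \<le> 1"
  proof -
    have tN: "0 < tp g N" by (rule tp_pos[OF g1])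
    have "2 * \<beta> * (g * real N) \<le> 1 - g"
    proof -
      have "2 * \<beta> * (g * real N) = 2 * g * (\<beta> * real N)" by simp
      also have "\<dots> \<le> 2 * g * ((1 - g) / 8)" using bN g0 by (intro mult_left_mono) auto
      also have "\<dots> = (g / 4) * (1 - g)" by simp
      also have "\<dots> \<le> 1 * (1 - g)" using g0 g1 by (intro mult_right_mono) auto
      finally show ?thesis by simp
    qed
    then have "2 * \<beta> * (g * real N) / (1 - g) \<le> 1" using g1 by simp
    then have "2 * \<beta> * (g * real N) / (1 - g) * tp g N \<le> 1 * tp g N" using tN
      by (intro mult_right_mono) auto
    moreover have "2 * \<beta> * (g * real N * tp g N / (1 - g)) = 2 * \<beta> * (g * real N) / (1 - g) * tp g N"
      by simp
    ultimately show ?thesis by linarith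
  qed
  finally show ?thesis by (simp add: \<beta>_def N_def)
qed

lemma b_geo: "m \<le> p \<Longrightarrow> bseq g (p + m) \<le> (1 - betaC g p) ^ m * bseq g p"
proof (induction m)
  case 0 then show ?case by simp
next
  case (Suc m)
  have ih: "bseq g (p + m) \<le> (1 - betaC g p) ^ m * bseq g p" using Suc by simp
  have f: "(g + real (p + m)) / (real (p + m) + 1) \<le> 1 - betaC g p"
  proof -
    have "(g + real (p + m)) / (real (p + m) + 1) = 1 - (1 - g) / (real (p + m) + 1)"
      by (simp add: field_simps)
    also have "\<dots> \<le> 1 - (1 - g) / (2 * real p)"
      using Suc.prems g1 p2 by (intro diff_left_mono divide_left_mono) auto
    also have "\<dots> \<le> 1 - betaC g p" using beta_2p by simp
    finally show ?thesis .
  qed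
  have "bseq g (p + Suc m) = bseq g (p + m) * ((g + real (p + m)) / (real (p + m) + 1))"
    by (simp add: bseq_Suc)
  also have "\<dots> \<le> ((1 - betaC g p) ^ m * bseq g p) * (1 - betaC g p)"
  proof (rule mult_mono[OF ih f])
    show "0 \<le> (1 - betaC g p) ^ m * bseq g p" using beta_lt1 bseq_nonneg[OF g0] by simp
    show "0 \<le> (g + real (p + m)) / (real (p + m) + 1)" using g0 by simp
  qed
  also have "\<dots> = (1 - betaC g p) ^ Suc m * bseq g p" by simp
  finally show ?case .
qed

end

context
  fixes g :: real and p :: nat
  assumes g0: "0 < g" and g1: "g < 1" and p2: "2 \<le> p"
begin

lemma c_tail: "k \<ge> p \<Longrightarrow> cseq g p k \<le> (1 - betaC g p) ^ (k - p) * bseq g p"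
proof (induction k rule: less_induct)
  case (less k)
  define l where "l = 1 - betaC g p"
  have l0: "0 < l" "l \<le> 1" using beta_pos[OF g0 g1 p2] beta_lt1[OF g0 g1 p2] by (auto simp: l_def)
  have bp: "0 \<le> bseq g p" by (rule bseq_nonneg[OF g0])
  show ?case
  proof (cases "k \<le> 2 * p")
    case True
    have "cseq g p k \<le> bseq g k" using cseq_bounds[OF g0 g1] by blast
    also have "bseq g k = bseq g (p + (k - p))" using less.prems by simp
    also have "\<dots> \<le> (1 - betaC g p) ^ (k - p) * bseq g p"
      using True by (intro b_geo[OF g0 g1 p2]) auto
    finally show ?thesis .
  next
    case False
    have k1: "k \<ge> 1" using False by simp
    have "cseq g p k = (\<Sum>r\<in>{1..k}. (- qc g p r) * cseq g p (k - r))" by (rule cseq_alt[OF k1])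
    also have "\<dots> = (\<Sum>r\<in>{1..p-1}. (- qc g p r) * cseq g p (k - r))"
      using False by (intro sum.mono_neutral_right) (auto simp: qc_def)
    also have "\<dots> = (\<Sum>r\<in>{1..p-1}. (- ctilde g r) * cseq g p (k - r))"
      using p2 by (intro sum.cong refl) (auto simp: qc_def)
    also have "\<dots> \<le> (\<Sum>r\<in>{1..p-1}. (- ctilde g r) * (l ^ (k - p) * bseq g p / l ^ r))"
    proof (intro sum_mono mult_left_mono)
      fix r assume r: "r \<in> {1..p-1}"
      have "cseq g p (k - r) \<le> (1 - betaC g p) ^ (k - r - p) * bseq g p"
        using r False by (intro less.IH) auto
      also have "\<dots> = l ^ (k - p) * bseq g p / l ^ r"
      proof -
        have e: "k - p = (k - r - p) + r" using r False by auto
        have "l ^ (k - p) = l ^ (k - r - p) * l ^ r"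
          by (subst e) (rule power_add)
        then show ?thesis using l0 by (simp add: l_def)
      qed
      finally show "cseq g p (k - r) \<le> l ^ (k - p) * bseq g p / l ^ r" .
      show "0 \<le> - ctilde g r" using a_nonneg[OF g0 g1] r by auto
    qed
    also have "\<dots> = l ^ (k - p) * bseq g p * (\<Sum>r\<in>{1..p-1}. (- ctilde g r) / l ^ r)"
      by (simp add: sum_distrib_left mult_ac)
    also have "\<dots> \<le> l ^ (k - p) * bseq g p * 1"
      using geo_sum[OF g0 g1 p2] l0 bp by (intro mult_left_mono) (auto simp: l_def)
    finally show ?thesis by (simp add: l_def)
  qed
qed

lemma sum_bound:
  assumes n: "p \<le> n"
  shows "(\<Sum>k<n. (cseq g p k)\<^sup>2) \<le>
              1 + genHarm (p - 1) (2 - 2 * g) / (Gamma g)\<^sup>2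
                + 1 / ((Gamma g)\<^sup>2 * real p powr (2 - 2 * g))
                    * (1 / (betaC g p * (2 - betaC g p)))"
proof -
  define \<beta> where "\<beta> = betaC g p"
  define l where "l = 1 - \<beta>"
  define G where "G = Gamma g"
  have b0: "0 < \<beta>" "\<beta> < 1" using beta_pos[OF g0 g1 p2] beta_lt1[OF g0 g1 p2] by (auto simp: \<beta>_def)
  have G0: "G > 0" using Gamma_real_pos[OF g0] by (simp add: G_def)
  have split: "{..<n} = {..<p} \<union> {p..<n}" using n by auto
  have S: "(\<Sum>k<n. (cseq g p k)\<^sup>2) = (\<Sum>k<p. (cseq g p k)\<^sup>2) + (\<Sum>k\<in>{p..<n}. (cseq g p k)\<^sup>2)"
    unfolding split by (rule sum.union_disjoint) auto
  have head: "(\<Sum>k<p. (cseq g p k)\<^sup>2) \<le> 1 + genHarm (p - 1) (2 - 2 * g) / G\<^sup>2"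
  proof -
    have "(\<Sum>k<p. (cseq g p k)\<^sup>2) = (cseq g p 0)\<^sup>2 + (\<Sum>k\<in>{1..<p}. (cseq g p k)\<^sup>2)"
      using p2 by (simp add: atLeast0LessThan[symmetric] sum.atLeast_Suc_lessThan)
    also have "(cseq g p 0)\<^sup>2 = 1" by (simp add: cseq.simps)
    also have "(\<Sum>k\<in>{1..<p}. (cseq g p k)\<^sup>2) \<le> (\<Sum>k\<in>{1..<p}. (1 / real k powr (2 - 2 * g)) / G\<^sup>2)"
    proof (intro sum_mono)
      fix k assume k: "k \<in> {1..<p}"
      have c: "0 \<le> cseq g p k" "cseq g p k \<le> bseq g k" using cseq_bounds[OF g0 g1] by auto
      have "cseq g p k \<le> real k powr (g - 1) / G"
        using c bseq_Gamma[OF g0 g1, of k] k by (simp add: G_def)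
      then have "(cseq g p k)\<^sup>2 \<le> (real k powr (g - 1) / G)\<^sup>2"
        using c by (intro power_mono) auto
      also have "(real k powr (g - 1) / G)\<^sup>2 = (real k powr (g - 1))\<^sup>2 / G\<^sup>2"
        by (simp add: power_divide)
      also have "(real k powr (g - 1))\<^sup>2 = 1 / real k powr (2 - 2 * g)"
      proof -
        have "(real k powr (g - 1))\<^sup>2 = real k powr (g - 1) * real k powr (g - 1)" by (simp add: power2_eq_square)
        also have "\<dots> = real k powr (- (2 - 2 * g))" by (simp add: powr_add[symmetric])
        also have "\<dots> = 1 / real k powr (2 - 2 * g)" by (rule powr_minus_divide)
        finally show ?thesis .
      qed
      finally show "(cseq g p k)\<^sup>2 \<le> (1 / real k powr (2 - 2 * g)) / G\<^sup>2" .
    qed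
    also have "(\<Sum>k\<in>{1..<p}. (1 / real k powr (2 - 2 * g)) / G\<^sup>2) = genHarm (p - 1) (2 - 2 * g) / G\<^sup>2"
    proof -
      have "{1..<p} = {1..p-1}" using p2 by auto
      then show ?thesis by (simp add: genHarm_def sum_divide_distrib)
    qed
    finally show ?thesis by simp
  qed
  have tail: "(\<Sum>k\<in>{p..<n}. (cseq g p k)\<^sup>2) \<le> 1 / (G\<^sup>2 * real p powr (2 - 2 * g)) * (1 / (\<beta> * (2 - \<beta>)))"
  proof -
    have bpb: "(bseq g p)\<^sup>2 \<le> 1 / (G\<^sup>2 * real p powr (2 - 2 * g))"
    proof -
      have "bseq g p \<le> real p powr (g - 1) / G" using bseq_Gamma[OF g0 g1, of p] p2 by (simp add: G_def)
      then have "(bseq g p)\<^sup>2 \<le> (real p powr (g - 1) / G)\<^sup>2"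
        using bseq_nonneg[OF g0] by (intro power_mono) auto
      also have "(real p powr (g - 1) / G)\<^sup>2 = (real p powr (g - 1))\<^sup>2 / G\<^sup>2"
        by (simp add: power_divide)
      also have "(real p powr (g - 1))\<^sup>2 = 1 / real p powr (2 - 2 * g)"
      proof -
        have "(real p powr (g - 1))\<^sup>2 = real p powr (g - 1) * real p powr (g - 1)" by (simp add: power2_eq_square)
        also have "\<dots> = real p powr (- (2 - 2 * g))" by (simp add: powr_add[symmetric])
        also have "\<dots> = 1 / real p powr (2 - 2 * g)" by (rule powr_minus_divide)
        finally show ?thesis .
      qed
      finally show ?thesis by (simp only: divide_divide_eq_left')
    qed
    have "(\<Sum>k\<in>{p..<n}. (cseq g p k)\<^sup>2) \<le> (\<Sum>k\<in>{p..<n}. (l ^ (k - p) * bseq g p)\<^sup>2)"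
    proof (intro sum_mono power_mono)
      fix k assume k: "k \<in> {p..<n}"
      show "cseq g p k \<le> l ^ (k - p) * bseq g p" using c_tail k by (simp add: l_def \<beta>_def)
      show "0 \<le> cseq g p k" using cseq_bounds[OF g0 g1] by blast
    qed
    also have "\<dots> = (\<Sum>j<n-p. (l\<^sup>2) ^ j) * (bseq g p)\<^sup>2"
    proof -
      have "(\<Sum>k\<in>{p..<n}. (l ^ (k - p) * bseq g p)\<^sup>2) = (\<Sum>j<n-p. (l ^ j * bseq g p)\<^sup>2)"
        by (intro sum.reindex_bij_witness[of _ "\<lambda>j. j + p" "\<lambda>k. k - p"]) auto
      also have "\<dots> = (\<Sum>j<n-p. (l\<^sup>2) ^ j * (bseq g p)\<^sup>2)"
        by (intro sum.cong refl) (simp add: power_mult_distrib power_mult[symmetric] mult.commute)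
      finally show ?thesis by (simp add: sum_distrib_right)
    qed
    also have "\<dots> \<le> (1 / (1 - l\<^sup>2)) * (1 / (G\<^sup>2 * real p powr (2 - 2 * g)))"
    proof (rule mult_mono)
      have l01: "0 \<le> l" "l < 1" using b0 by (auto simp: l_def)
      have "l\<^sup>2 \<le> l" using l01 by (simp add: power2_eq_square mult_left_le)
      then have l2: "0 \<le> l\<^sup>2" "l\<^sup>2 < 1" using l01 by auto
      have "(\<Sum>j<n-p. (l\<^sup>2) ^ j) = (1 - (l\<^sup>2) ^ (n - p)) / (1 - l\<^sup>2)"
        using l2 by (simp add: sum_gp_strict)
      also have "\<dots> \<le> 1 / (1 - l\<^sup>2)"
        using l2 by (intro divide_right_mono) auto
      finally show "(\<Sum>j<n-p. (l\<^sup>2) ^ j) \<le> 1 / (1 - l\<^sup>2)" .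
      show "(bseq g p)\<^sup>2 \<le> 1 / (G\<^sup>2 * real p powr (2 - 2 * g))" by (rule bpb)
      show "0 \<le> 1 / (1 - l\<^sup>2)" using l2 by simp
      show "0 \<le> (bseq g p)\<^sup>2" by simp
    qed
    also have "1 - l\<^sup>2 = \<beta> * (2 - \<beta>)" by (simp add: l_def power2_eq_square algebra_simps)
    finally show ?thesis by (simp add: mult.commute)
  qed
  show ?thesis using S head tail by (simp add: G_def \<beta>_def)
qed

end

lemma powr_mvt:
  assumes x: "x \<ge> (2::real)"
  obtains z where "x - 1 < z" "z < x" "x powr a - (x - 1) powr a = a * z powr (a - 1)"
proof -
  have "\<exists>z. x - 1 < z \<and> z < x \<and> (x powr a - (x - 1) powr a = (x - (x - 1)) * (a * z powr (a - 1)))"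
  proof (rule MVT2)
    show "x - 1 < x" by simp
    fix t assume "x - 1 \<le> t" "t \<le> x"
    then have "t > 0" using x by simp
    then show "((\<lambda>t. t powr a) has_real_derivative a * t powr (a - 1)) (at t)"
      by (rule has_real_derivative_powr)
  qed
  then show ?thesis using that by auto
qed

lemma powr_step_pos:
  assumes a: "0 < a" "a \<le> 1" and x: "x \<ge> (2::real)"
  shows "a * x powr (a - 1) \<le> x powr a - (x - 1) powr a"
proof -
  obtain z where z: "x - 1 < z" "z < x" "x powr a - (x - 1) powr a = a * z powr (a - 1)"
    using powr_mvt[OF x] by blast
  have "x powr (a - 1) \<le> z powr (a - 1)" using z x a by (intro powr_mono2') auto
  then show ?thesis using z a by (simp add: mult_left_mono)
qed

lemma powr_step_neg:
  assumes a: "a < 0" and x: "x \<ge> (2::real)"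
  shows "(- a) * x powr (a - 1) \<le> (x - 1) powr a - x powr a"
proof -
  obtain z where z: "x - 1 < z" "z < x" "x powr a - (x - 1) powr a = a * z powr (a - 1)"
    using powr_mvt[OF x] by blast
  have "x powr (a - 1) \<le> z powr (a - 1)" using z x a by (intro powr_mono2') auto
  then have "(- a) * x powr (a - 1) \<le> (- a) * z powr (a - 1)" using a by (intro mult_left_mono) auto
  then show ?thesis using z by simp
qed

lemma genHarm_Suc: "genHarm (Suc N) s = genHarm N s + real (Suc N) powr (- s)"
  by (simp add: genHarm_def powr_minus_divide)

lemma H_big:
  assumes g: "1/2 < g" "g < 1"
  shows "genHarm N (2 - 2 * g) \<le> real N powr (2 * g - 1) / (2 * g - 1)"
proof (induction N)
  case 0 then show ?case by (simp add: genHarm_def)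
next
  case (Suc N)
  define a where "a = 2 * g - 1"
  have a: "0 < a" "a \<le> 1" using g by (auto simp: a_def)
  have e: "- (2 - 2 * g) = a - 1" by (simp add: a_def)
  have step: "real (Suc N) powr (a - 1) \<le> (real (Suc N) powr a - real N powr a) / a"
  proof (cases "N = 0")
    case True then show ?thesis using a by simp
  next
    case False
    then have "real (Suc N) \<ge> 2" by simp
    from powr_step_pos[OF a this] have "a * real (Suc N) powr (a - 1) \<le> real (Suc N) powr a - real N powr a"
      by simp
    then show ?thesis using a by (simp add: field_simps)
  qed
  have "genHarm (Suc N) (2 - 2 * g) = genHarm N (2 - 2 * g) + real (Suc N) powr (a - 1)"
    unfolding genHarm_Suc e by simp
  also have "\<dots> \<le> real N powr a / a + (real (Suc N) powr a - real N powr a) / a"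
    using Suc step by (simp add: a_def)
  also have "\<dots> = real (Suc N) powr a / a" by (simp add: add_divide_distrib[symmetric])
  finally show ?case by (simp add: a_def)
qed

lemma H_small:
  assumes g: "0 < g" "g < 1/2"
  shows "genHarm N (2 - 2 * g) \<le> 1 + 1 / (1 - 2 * g)"
proof -
  define a where "a = 2 * g - 1"
  have a: "a < 0" using g by (simp add: a_def)
  have e: "- (2 - 2 * g) = a - 1" by (simp add: a_def)
  have main: "N \<ge> 1 \<Longrightarrow> genHarm N (2 - 2 * g) \<le> 1 + (1 - real N powr a) / (- a)" for N
  proof (induction N)
    case 0 then show ?case by simp
  next
    case (Suc N)
    show ?case
    proof (cases "N = 0")
      case True then show ?thesis by (simp add: genHarm_def)
    next
      case False
      then have x: "real (Suc N) \<ge> 2" by simp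
      have step: "real (Suc N) powr (a - 1) \<le> (real N powr a - real (Suc N) powr a) / (- a)"
        using powr_step_neg[OF a x] a by (simp add: field_simps)
      have "genHarm (Suc N) (2 - 2 * g) = genHarm N (2 - 2 * g) + real (Suc N) powr (a - 1)"
        unfolding genHarm_Suc e by simp
      also have "\<dots> \<le> 1 + (1 - real N powr a) / (- a) + (real N powr a - real (Suc N) powr a) / (- a)"
        using Suc False step by simp
      also have "\<dots> = 1 + (1 - real (Suc N) powr a) / (- a)" using a by (simp add: field_simps)
      finally show ?thesis .
    qed
  qed
  show ?thesis
  proof (cases "N = 0")
    case True then show ?thesis using g by (simp add: genHarm_def)
  next
    case False
    then have "genHarm N (2 - 2 * g) \<le> 1 + (1 - real N powr a) / (- a)" using main by simp
    also have "\<dots> \<le> 1 + 1 / (- a)" using a by (intro add_left_mono divide_right_mono) auto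
    finally show ?thesis by (simp add: a_def)
  qed
qed

lemma H_half:
  assumes N: "N \<ge> 1"
  shows "genHarm N 1 \<le> 1 + ln (real N)"
  using N
proof (induction N)
  case 0 then show ?case by simp
next
  case (Suc N)
  show ?case
  proof (cases "N = 0")
    case True then show ?thesis by (simp add: genHarm_def)
  next
    case False
    have Np: "real N > 0" using False by simp
    have "ln (real N / real (Suc N)) \<le> real N / real (Suc N) - 1"
      using Np by (intro ln_le_minus_one) simp
    moreover have "ln (real N / real (Suc N)) = ln (real N) - ln (real (Suc N))"
      using Np by (simp add: ln_div)
    moreover have "real N / real (Suc N) - 1 = - (1 / real (Suc N))" by (simp add: field_simps)
    ultimately have step: "1 / real (Suc N) \<le> ln (real (Suc N)) - ln (real N)" by linarith
    have "genHarm (Suc N) 1 = genHarm N 1 + 1 / real (Suc N)"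
      by (simp add: genHarm_Suc powr_minus_divide)
    also have "\<dots> \<le> 1 + ln (real N) + (ln (real (Suc N)) - ln (real N))"
      using Suc False step by simp
    finally show ?thesis by simp
  qed
qed

lemma genHarm_nonneg: "0 \<le> genHarm N s"
  by (simp add: genHarm_def sum_nonneg)

lemma sqrt_bound: "0 \<le> X \<Longrightarrow> R \<le> 100 * X \<Longrightarrow> sqrt R \<le> 10 * sqrt X"
proof -
  assume X: "0 \<le> X" and R: "R \<le> 100 * X"
  have "sqrt R \<le> sqrt (10\<^sup>2 * X)" using R by simp
  also have "\<dots> = 10 * sqrt X" by (simp add: real_sqrt_mult)
  finally show ?thesis .
qed

lemma tail_term:
  assumes g0: "0 < g" and g1: "g < 1" and p2: "2 \<le> p"
  shows "1 / ((Gamma g)\<^sup>2 * real p powr (2 - 2 * g)) * (1 / (betaC g p * (2 - betaC g p)))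
          \<le> 8 * real p powr (2 * g - 1) / (1 - g)"
proof -
  define \<beta> where "\<beta> = betaC g p"
  have b: "(1 - g) / (8 * real p) \<le> \<beta>" "\<beta> < 1" using beta_lower[OF g0 g1 p2] beta_lt1[OF g0 g1 p2]
    by (auto simp: \<beta>_def)
  have lp: "0 < (1 - g) / (8 * real p)" using g1 p2 by simp
  have hb: "(1 - g) / (8 * real p) \<le> \<beta> * (2 - \<beta>)"
  proof -
    have "\<beta> * 1 \<le> \<beta> * (2 - \<beta>)" using b lp by (intro mult_left_mono) auto
    then show ?thesis using b by simp
  qed
  then have "1 / (\<beta> * (2 - \<beta>)) \<le> 1 / ((1 - g) / (8 * real p))"
  proof (rule divide_left_mono)
    note h = hb
    have pos: "0 < \<beta> * (2 - \<beta>)" using h lp by linarith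
    show "0 < \<beta> * (2 - \<beta>) * ((1 - g) / (8 * real p))" using mult_pos_pos[OF pos lp] .
  qed simp
  then have B: "1 / (\<beta> * (2 - \<beta>)) \<le> 8 * real p / (1 - g)" by simp
  have G: "1 \<le> (Gamma g)\<^sup>2" using Gamma_ge1[OF g0 g1] by (simp add: one_le_power)
  have pp: "real p powr (2 - 2 * g) > 0" using p2 by simp
  have A: "1 / ((Gamma g)\<^sup>2 * real p powr (2 - 2 * g)) \<le> 1 / real p powr (2 - 2 * g)"
  proof (rule divide_left_mono)
    have "1 * real p powr (2 - 2 * g) \<le> (Gamma g)\<^sup>2 * real p powr (2 - 2 * g)"
      using G pp by (intro mult_right_mono) auto
    then show "real p powr (2 - 2 * g) \<le> (Gamma g)\<^sup>2 * real p powr (2 - 2 * g)" by simp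
    have Gp: "0 < (Gamma g)\<^sup>2" using Gamma_real_pos[OF g0] by simp
    show "0 < (Gamma g)\<^sup>2 * real p powr (2 - 2 * g) * real p powr (2 - 2 * g)"
      using mult_pos_pos[OF mult_pos_pos[OF Gp pp] pp] .
  qed simp
  have "1 / ((Gamma g)\<^sup>2 * real p powr (2 - 2 * g)) * (1 / (\<beta> * (2 - \<beta>)))
        \<le> 1 / real p powr (2 - 2 * g) * (8 * real p / (1 - g))"
    using A B pp hb lp by (intro mult_mono) auto
  also have "\<dots> = 8 * (real p powr (2 * g - 2) * real p) / (1 - g)"
  proof -
    have e: "real p powr (2 * g - 2) = 1 / real p powr (2 - 2 * g)"
      using powr_minus_divide[of "real p" "2 - 2 * g"] by simp
    show ?thesis by (simp add: e)
  qed
  also have "real p powr (2 * g - 2) * real p = real p powr (2 * g - 1)"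
  proof -
    have "real p powr (2 * g - 1) = real p powr ((2 * g - 2) + 1)" by simp
    also have "\<dots> = real p powr (2 * g - 2) * real p powr 1" by (rule powr_add)
    also have "\<dots> = real p powr (2 * g - 2) * real p" using p2 by simp
    finally show ?thesis by simp
  qed
  finally show ?thesis by (simp add: \<beta>_def)
qed

theorem mainTheorem8:
  shows "(\<forall>(\<gamma>::real) (n::nat) (p::nat). 0 < \<gamma> \<and> \<gamma> < 1 \<and> 2 \<le> p \<and> p \<le> n \<longrightarrow>
            (norm12 (Cmat \<gamma> p n))\<^sup>2 \<le>
              1 + genHarm (p - 1) (2 - 2 * \<gamma>) / (Gamma \<gamma>)\<^sup>2
                + 1 / ((Gamma \<gamma>)\<^sup>2 * real p powr (2 - 2 * \<gamma>))
                    * (1 / (betaC \<gamma> p * (2 - betaC \<gamma> p))))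
       \<and> (\<exists>K::real. \<forall>(\<gamma>::real) (n::nat) (p::nat). 0 < \<gamma> \<and> \<gamma> < 1 \<and> 2 \<le> p \<and> p \<le> n \<longrightarrow>
            norm12 (Cmat \<gamma> p n) \<le>
              (if \<gamma> < 1/2 then K / sqrt (1/2 - \<gamma>)
               else if \<gamma> = 1/2 then K * sqrt (ln (real p))
               else K * real p powr (\<gamma> - 1/2) / sqrt ((1 - \<gamma>) * (\<gamma> - 1/2))))"
proof -
  have P1: "\<forall>(\<gamma>::real) (n::nat) (p::nat). 0 < \<gamma> \<and> \<gamma> < 1 \<and> 2 \<le> p \<and> p \<le> n \<longrightarrow>
            (norm12 (Cmat \<gamma> p n))\<^sup>2 \<le>
              1 + genHarm (p - 1) (2 - 2 * \<gamma>) / (Gamma \<gamma>)\<^sup>2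
                + 1 / ((Gamma \<gamma>)\<^sup>2 * real p powr (2 - 2 * \<gamma>))
                    * (1 / (betaC \<gamma> p * (2 - betaC \<gamma> p)))"
  proof (intro allI impI)
    fix g :: real and n p :: nat
    assume H: "0 < g \<and> g < 1 \<and> 2 \<le> p \<and> p \<le> n"
    then have "(norm12 (Cmat g p n))\<^sup>2 \<le> (\<Sum>k<n. (cseq g p k)\<^sup>2)"
      by (intro norm12_sq_le) auto
    also have "\<dots> \<le> 1 + genHarm (p - 1) (2 - 2 * g) / (Gamma g)\<^sup>2
                + 1 / ((Gamma g)\<^sup>2 * real p powr (2 - 2 * g))
                    * (1 / (betaC g p * (2 - betaC g p)))"
      using H by (intro sum_bound) auto
    finally show "(norm12 (Cmat g p n))\<^sup>2 \<le> 1 + genHarm (p - 1) (2 - 2 * g) / (Gamma g)\<^sup>2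
                + 1 / ((Gamma g)\<^sup>2 * real p powr (2 - 2 * g))
                    * (1 / (betaC g p * (2 - betaC g p)))" .
  qed
  have P2: "\<exists>K::real. \<forall>(\<gamma>::real) (n::nat) (p::nat). 0 < \<gamma> \<and> \<gamma> < 1 \<and> 2 \<le> p \<and> p \<le> n \<longrightarrow>
            norm12 (Cmat \<gamma> p n) \<le>
              (if \<gamma> < 1/2 then K / sqrt (1/2 - \<gamma>)
               else if \<gamma> = 1/2 then K * sqrt (ln (real p))
               else K * real p powr (\<gamma> - 1/2) / sqrt ((1 - \<gamma>) * (\<gamma> - 1/2)))"
  proof (intro exI[of _ 10] allI impI)
    fix g :: real and n p :: nat
    assume H: "0 < g \<and> g < 1 \<and> 2 \<le> p \<and> p \<le> n"
    then have g0: "0 < g" and g1: "g < 1" and p2: "2 \<le> p" by auto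
    define Hm where "Hm = genHarm (p - 1) (2 - 2 * g)"
    define P where "P = real p powr (2 * g - 1)"
    define R where "R = 1 + Hm / (Gamma g)\<^sup>2
                + 1 / ((Gamma g)\<^sup>2 * real p powr (2 - 2 * g))
                    * (1 / (betaC g p * (2 - betaC g p)))"
    have nR: "norm12 (Cmat g p n) \<le> sqrt R"
      using P1 H by (intro real_le_rsqrt) (auto simp: R_def Hm_def)
    have Hm0: "0 \<le> Hm" by (simp add: Hm_def genHarm_nonneg)
    have Pp: "0 < P" using p2 by (simp add: P_def)
    have G: "1 \<le> (Gamma g)\<^sup>2" using Gamma_ge1[OF g0 g1] by (simp add: one_le_power)
    have HG: "Hm / (Gamma g)\<^sup>2 \<le> Hm"
    proof -
      have "Hm / (Gamma g)\<^sup>2 \<le> Hm / 1" using G Hm0 by (intro divide_left_mono) auto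
      then show ?thesis by simp
    qed
    have R1: "R \<le> 1 + Hm + 8 * P / (1 - g)"
      using HG tail_term[OF g0 g1 p2] by (simp add: R_def P_def)
    show "norm12 (Cmat g p n) \<le>
              (if g < 1/2 then 10 / sqrt (1/2 - g)
               else if g = 1/2 then 10 * sqrt (ln (real p))
               else 10 * real p powr (g - 1/2) / sqrt ((1 - g) * (g - 1/2)))"
    proof (cases "g < 1/2")
      case True
      define u where "u = 1 / (1 - 2 * g)"
      have u1: "1 \<le> u" using g0 True by (simp add: u_def field_simps)
      have Hb: "Hm \<le> 1 + u" using H_small[OF g0 True] by (simp add: Hm_def u_def)
      have P1': "P \<le> 1"
      proof -
        have "real p powr (2 * g - 1) \<le> 1 powr (2 * g - 1)"
          using True p2 by (intro powr_mono2') auto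
        then show ?thesis by (simp add: P_def)
      qed
      have T8: "8 * P / (1 - g) \<le> 16"
      proof -
        have "8 * P / (1 - g) \<le> 8 * 1 / (1 - g)" using P1' g1 by (intro divide_right_mono) auto
        also have "\<dots> \<le> 16" using True g0 by (simp add: field_simps)
        finally show ?thesis .
      qed
      have X: "1 / (1/2 - g) = 2 * u" using True by (simp add: u_def field_simps)
      have "R \<le> 100 * (1 / (1/2 - g))" using R1 Hb T8 u1 X by simp
      then have "sqrt R \<le> 10 * sqrt (1 / (1/2 - g))" using True by (intro sqrt_bound) auto
      also have "\<dots> = 10 / sqrt (1/2 - g)" by (simp add: real_sqrt_divide)
      finally show ?thesis using nR True by simp
    next
      case False
      show ?thesis
      proof (cases "g = 1/2")
        case True
        have pl: "ln (real p) \<ge> 1/2"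
        proof -
          have "ln (1 / real p) \<le> 1 / real p - 1" using p2 by (intro ln_le_minus_one) auto
          moreover have "ln (1 / real p) = - ln (real p)" using p2 by (simp add: ln_div)
          moreover have "1 / real p \<le> 1/2" using p2 by (simp add: field_simps)
          ultimately show ?thesis by linarith
        qed
        have Hb: "Hm \<le> 1 + ln (real p)"
        proof -
          have e1: "2 - 2 * g = (1::real)" using True by simp
          have "Hm = genHarm (p - 1) 1" unfolding Hm_def e1 ..
          also have "\<dots> \<le> 1 + ln (real (p - 1))" using p2 by (intro H_half) auto
          also have "\<dots> \<le> 1 + ln (real p)" using p2 by simp
          finally show ?thesis .
        qed
        have PP: "P = 1" using True p2 by (simp add: P_def)
        have "R \<le> 100 * ln (real p)" using R1 Hb PP True pl by simp
        then have "sqrt R \<le> 10 * sqrt (ln (real p))" using pl by (intro sqrt_bound) auto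
        then have "norm12 (Cmat g p n) \<le> 10 * sqrt (ln (real p))" using nR by linarith
        then show ?thesis unfolding if_not_P[OF False] if_P[OF True] .
      next
        case False2: False
        have gh: "1/2 < g" using False False2 by simp
        define D where "D = (1 - g) * (g - 1/2)"
        have D0: "0 < D" using gh g1 by (simp add: D_def)
        have D1: "D \<le> 1 - g" using gh g1 by (simp add: D_def mult_left_le)
        have D2: "D \<le> 2 * g - 1"
        proof -
          have "D \<le> 1 * (g - 1/2)" unfolding D_def using gh g0 by (intro mult_right_mono) auto
          then show ?thesis using gh by simp
        qed
        have P1'': "1 \<le> P"
        proof -
          have "1 powr (2 * g - 1) \<le> real p powr (2 * g - 1)" using gh p2 by (intro powr_mono2) auto
          then show ?thesis by (simp add: P_def)
        qed
        have Hb: "Hm \<le> P / (2 * g - 1)"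
        proof -
          have "Hm \<le> real (p - 1) powr (2 * g - 1) / (2 * g - 1)" using H_big[OF gh g1] by (simp add: Hm_def)
          also have "\<dots> \<le> P / (2 * g - 1)" unfolding P_def using gh p2
            by (intro divide_right_mono powr_mono2) auto
          finally show ?thesis .
        qed
        have t1: "1 \<le> P / D"
        proof -
          have "P / 1 \<le> P / D" using D0 D1 g0 Pp by (intro divide_left_mono) auto
          then show ?thesis using P1'' by simp
        qed
        have t2: "P / (2 * g - 1) \<le> P / D" using D0 D2 Pp by (intro divide_left_mono) auto
        have t3: "8 * P / (1 - g) \<le> 8 * P / D" using D0 D1 Pp by (intro divide_left_mono) auto
        have "R \<le> P / D + P / D + 8 * P / D" using R1 Hb t1 t2 t3 by linarith
        also have "\<dots> = 10 * (P / D)" by simp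
        also have "\<dots> \<le> 100 * (P / D)"
        proof -
          have "0 \<le> P / D" using Pp D0 by simp
          then show ?thesis by linarith
        qed
        finally have "R \<le> 100 * (P / D)" .
        then have "sqrt R \<le> 10 * sqrt (P / D)" using Pp D0 by (intro sqrt_bound) auto
        also have "sqrt (P / D) = real p powr (g - 1/2) / sqrt D"
        proof -
          have "sqrt P = P powr (1/2)" using Pp by (simp add: powr_half_sqrt)
          also have "\<dots> = real p powr ((2 * g - 1) * (1/2))" by (simp add: P_def powr_powr)
          also have "(2 * g - 1) * (1/2) = g - 1/2" by simp
          finally show ?thesis by (simp add: real_sqrt_divide)
        qed
        finally show ?thesis using nR False False2 by (simp add: D_def)
      qed
    qed
  qed
  show ?thesis using P1 P2 by blast
qed

end
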